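(* Let $\mathscr D:\mathscr N=\mathscr N_1\cup\cdots\cup\mathscr N_k$ be a pairwise binary-sized decomposition of a chemical reaction network $\mathscr N$ with set of common complexes $\mathscr C_{\mathscr D}$. If $P: y-x_1-\cdots-x_q$ is a path in $\mathscr N$ such that $y\in\mathscr C_{\mathscr D}$ while $x_1,\dots,x_q\notin\mathscr C_{\mathscr D}$, then there is exactly one subnetwork $\mathscr N_i$ that contains $P$.
   Context: A CRN $\mathscr N=(\mathscr S,\mathscr C,\mathscr R)$ is viewed as a directed graph with vertex set the complexes $\mathscr C$ and arcs the reactions $\mathscr R$. A path is a path in the underlying undirected graph (consecutive complexes joined by a reaction in either direction); a subnetwork contains a path if each of its edges comes from a reaction of that subnetwork. A decomposition $\mathscr N=\mathscr N_1\cup\cdots\cup\mathscr N_k$ is given by a partition $\{\mathscr R_1,\dots,\mathscr R_k\}$ of $\mathscr R$, $k\ge2$; the subnetwork $\mathscr N_i$ has reaction set $\mathscr R_i$ and complex set $\mathscr C_i$ consisting of the complexes occurring in reactions of $\mathscr R_i$. The set $\mathscr C_{\mathscr D}$ of common complexes consists of all complexes lying in the complex sets of at least two distinct subnetworks; $d=|\mathscr C_{\mathscr D}|$. The decomposition is pairwise binary-sized (PBS) if there are integers $0\le b\le c\le d$ such that $|\mathscr C_i\cap\mathscr C_j|\in\{b,c\}$ for all $i\neq j$. *)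

theory Defs
  imports Main
begin

text \<open>A CRN is modelled by its complex set C and reaction set R (arcs between
complexes); species are left abstract (complexes are elements of a type 'c).\<close>

definition is_crn :: "'c set \<Rightarrow> ('c \<times> 'c) set \<Rightarrow> bool" where
  "is_crn C R \<longleftrightarrow> finite C \<and> R \<subseteq> C \<times> C \<and> (\<forall>(a,b)\<in>R. a \<noteq> b)
     \<and> (\<forall>c\<in>C. \<exists>(a,b)\<in>R. c = a \<or> c = b)"

definition complexes_of :: "('c \<times> 'c) set \<Rightarrow> 'c set" where
  "complexes_of Ri = fst ` Ri \<union> snd ` Ri"

definition is_decomposition :: "('c \<times> 'c) set \<Rightarrow> nat \<Rightarrow> (nat \<Rightarrow> ('c \<times> 'c) set) \<Rightarrow> bool" where
  "is_decomposition R k Rs \<longleftrightarrow> k \<ge> 2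
     \<and> (\<forall>i\<in>{1..k}. Rs i \<noteq> {})
     \<and> (\<forall>i\<in>{1..k}. \<forall>j\<in>{1..k}. i \<noteq> j \<longrightarrow> Rs i \<inter> Rs j = {})
     \<and> (\<Union>i\<in>{1..k}. Rs i) = R"

definition common_complexes :: "nat \<Rightarrow> (nat \<Rightarrow> ('c \<times> 'c) set) \<Rightarrow> 'c set" where
  "common_complexes k Rs = {z. \<exists>i\<in>{1..k}. \<exists>j\<in>{1..k}. i \<noteq> j
       \<and> z \<in> complexes_of (Rs i) \<and> z \<in> complexes_of (Rs j)}"

definition is_PBS :: "nat \<Rightarrow> (nat \<Rightarrow> ('c \<times> 'c) set) \<Rightarrow> bool" where
  "is_PBS k Rs \<longleftrightarrow> (\<exists>b c. b \<le> c \<and> c \<le> card (common_complexes k Rs)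
     \<and> (\<forall>i\<in>{1..k}. \<forall>j\<in>{1..k}. i \<noteq> j \<longrightarrow>
          card (complexes_of (Rs i) \<inter> complexes_of (Rs j)) \<in> {b, c}))"

text \<open>A path v0 - v1 - ... - vq (as the list of its vertices, q \<ge> 1) in the
underlying undirected graph of reaction set R: distinct vertices, consecutive
ones joined by a reaction in either direction.\<close>
definition is_path :: "('c \<times> 'c) set \<Rightarrow> 'c list \<Rightarrow> bool" where
  "is_path R vs \<longleftrightarrow> length vs \<ge> 2 \<and> distinct vs
     \<and> (\<forall>n < length vs - 1. (vs ! n, vs ! Suc n) \<in> R \<or> (vs ! Suc n, vs ! n) \<in> R)"

definition contains_path :: "('c \<times> 'c) set \<Rightarrow> 'c list \<Rightarrow> bool" where
  "contains_path Ri vs \<longleftrightarrow>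
     (\<forall>n < length vs - 1. (vs ! n, vs ! Suc n) \<in> Ri \<or> (vs ! Suc n, vs ! n) \<in> Ri)"

end

theory Submission
  imports Defs
begin

lemma cplx: "(a,b) \<in> Ri \<Longrightarrow> a \<in> complexes_of Ri \<and> b \<in> complexes_of Ri"
  unfolding complexes_of_def by (simp add: rev_image_eqI)

lemma commI: "i \<in> {1..k} \<Longrightarrow> j \<in> {1..k} \<Longrightarrow> i \<noteq> j \<Longrightarrow> z \<in> complexes_of (Rs i)
   \<Longrightarrow> z \<in> complexes_of (Rs j) \<Longrightarrow> z \<in> common_complexes k Rs"
  unfolding common_complexes_def by blast

theorem lemma2:
  fixes C :: "'c set" and R :: "('c \<times> 'c) set"
    and k :: nat and Rs :: "nat \<Rightarrow> ('c \<times> 'c) set"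
    and y :: 'c and xs :: "'c list"
  assumes "is_crn C R"
    and "is_decomposition R k Rs"
    and "is_PBS k Rs"
    and "is_path R (y # xs)"
    and "y \<in> common_complexes k Rs"
    and "\<forall>x\<in>set xs. x \<notin> common_complexes k Rs"
  shows "\<exists>!i. i \<in> {1..k} \<and> contains_path (Rs i) (y # xs)"
proof -
  define vs where "vs = y # xs"
  define E where "E i n \<longleftrightarrow> (vs!n, vs!Suc n) \<in> Rs i \<or> (vs!Suc n, vs!n) \<in> Rs i" for i n
  have dec: "\<forall>i\<in>{1..k}. \<forall>j\<in>{1..k}. i \<noteq> j \<longrightarrow> Rs i \<inter> Rs j = {}" "(\<Union>i\<in>{1..k}. Rs i) = R"
    using assms(2) unfolding is_decomposition_def by blast+
  have len: "length vs \<ge> 2" and pth: "\<forall>n < length vs - 1. (vs ! n, vs ! Suc n) \<in> R \<or> (vs ! Suc n, vs ! n) \<in> R"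
  proof -
    have "is_path R vs" using assms(4) vs_def by simp
    then show "length vs \<ge> 2" "\<forall>n < length vs - 1. (vs ! n, vs ! Suc n) \<in> R \<or> (vs ! Suc n, vs ! n) \<in> R"
      unfolding is_path_def by blast+
  qed
  have ex: "\<exists>i\<in>{1..k}. E i n" if "n < length vs - 1" for n
  proof -
    have "(vs ! n, vs ! Suc n) \<in> (\<Union>i\<in>{1..k}. Rs i) \<or> (vs ! Suc n, vs ! n) \<in> (\<Union>i\<in>{1..k}. Rs i)"
      using pth that unfolding dec(2) by blast
    then show ?thesis unfolding E_def by (elim disjE UN_E) auto
  qed
  have nc: "vs ! m \<notin> common_complexes k Rs" if "0 < m" "m < length vs" for m
  proof -
    have "vs ! m \<in> set xs" using that unfolding vs_def
      by (cases m) auto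
    then show ?thesis using assms(6) by blast
  qed
  have Ev: "vs ! Suc n \<in> complexes_of (Rs i)" "vs ! n \<in> complexes_of (Rs i)" if "E i n" for i n
    using that cplx[of "vs!n" "vs!Suc n"] cplx[of "vs!Suc n" "vs!n"] unfolding E_def by blast+
  obtain i0 where i0: "i0 \<in> {1..k}" "E i0 0" using ex[of 0] len by auto
  have all: "E i0 n" if "n < length vs - 1" for n
    using that
  proof (induction n)
    case 0 then show ?case using i0 by simp
  next
    case (Suc n)
    obtain j where j: "j \<in> {1..k}" "E j (Suc n)" using ex Suc.prems by blast
    have h: "E i0 n" using Suc by simp
    show ?case
    proof (cases "j = i0")
      case True then show ?thesis using j by simp
    next
      case False
      have "vs ! Suc n \<in> common_complexes k Rs"
        using commI[OF i0(1) j(1)] Ev[OF h] Ev[OF j(2)] False by metis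
      then show ?thesis using nc[of "Suc n"] Suc.prems by simp
    qed
  qed
  show ?thesis
  proof (rule ex1I[of _ i0])
    show "i0 \<in> {1..k} \<and> contains_path (Rs i0) (y # xs)"
    proof -
      have "contains_path (Rs i0) vs" using all unfolding contains_path_def E_def by blast
      then show ?thesis using i0(1) vs_def by simp
    qed
  next
    fix j assume a: "j \<in> {1..k} \<and> contains_path (Rs j) (y # xs)"
    then have "contains_path (Rs j) vs" using vs_def by simp
    then have "E j 0" using len unfolding contains_path_def E_def by simp
    show "j = i0"
    proof (rule ccontr)
      assume "j \<noteq> i0"
      have "vs ! 1 \<in> common_complexes k Rs"
        using commI[OF i0(1), of j] Ev[OF \<open>E j 0\<close>] Ev[OF i0(2)] a \<open>j \<noteq> i0\<close> by simp
      then show False using nc[of 1] len by simp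
    qed
  qed
qed

end
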